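(* Let $G$ be a graph, $\alpha,k$ positive integers, and $S\subseteq V(G)$ with $|S|\ge\alpha+1$ and $|\delta_G(S,V(G)\setminus S)|\le 2\alpha^2+4k$. For $v\in S$ let $\gamma_S(v)=|\delta_G(\{v\},V(G)\setminus S)|$, and for $X\subseteq S$ let $\gamma_S(X)=\sum_{v\in X}\gamma_S(v)$. If $\mathrm{ecrw}_\alpha(G)\le k$, then there is a tree-cut decomposition $\mathcal{T}=(T,\{X_t\}_{t\in V(T)})$ of $G[S]$ such that: (a) $T$ is a star with center $t_c$ and at least one leaf; (b) $|X_{t_c}|\le\alpha$ and $\mathrm{cross}_{\mathcal T}(t_c)\le k$; (c) for each leaf $t$ of $T$, $\gamma_S(X_t)\le\alpha^2+2k$ and $|\delta_{G[S]}(X_t,X_{t_c})|\le\alpha^2+k$; (d) there is no leaf $q$ of $T$ with $X_q=S$. (That is, $(G[S],\alpha,k,\gamma_S)$ is a Yes-instance of \textsc{Constrained Star-Cut Decomposition}.)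
   Context: For disjoint vertex sets $S_1,S_2$ of a graph $G$, $\delta_G(S_1,S_2)$ denotes the set of edges with one endpoint in $S_1$ and the other in $S_2$. A tree-cut decomposition of a graph $G$ is a pair $\mathcal{T}=(T,\{X_t\}_{t\in V(T)})$ where $T$ is a tree and the bags $X_t\subseteq V(G)$ are pairwise disjoint (possibly empty) with $\bigcup_{t\in V(T)}X_t=V(G)$. For a node $t$ of $T$, let $T_1,\dots,T_m$ be the connected components of $T-t$ and $Z_i=\bigcup_{s\in V(T_i)}X_s$; $\mathrm{cross}_{\mathcal{T}}(t)$ is the number of edges of $G$ whose two endpoints lie in two distinct sets among $Z_1,\dots,Z_m$ (if $T$ has one node, $\mathrm{cross}_{\mathcal T}(t)=0$). The crossing number of $\mathcal{T}$ is $\max_{t}\mathrm{cross}_{\mathcal{T}}(t)$, and the thickness of $\mathcal{T}$ is $\max_t|X_t|$. $\mathrm{ecrw}_\alpha(G)$ is the minimum crossing number over tree-cut decompositions of $G$ of thickness at most $\alpha$. *)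

theory Defs
  imports Main
begin

definition graph :: "'a set \<Rightarrow> 'a set set \<Rightarrow> bool" where
  "graph V E \<longleftrightarrow> finite V \<and> (\<forall>e\<in>E. e \<subseteq> V \<and> card e = 2)"

definition delta :: "'a set set \<Rightarrow> 'a set \<Rightarrow> 'a set \<Rightarrow> 'a set set" where
  "delta E S1 S2 = {e \<in> E. \<exists>u\<in>S1. \<exists>v\<in>S2. e = {u, v}}"

definition induced_edges :: "'a set set \<Rightarrow> 'a set \<Rightarrow> 'a set set" where
  "induced_edges E S = {e \<in> E. e \<subseteq> S}"

definition reach :: "'b set \<Rightarrow> 'b set set \<Rightarrow> 'b \<Rightarrow> 'b \<Rightarrow> bool" where
  "reach N ET = (\<lambda>x y. x \<in> N \<and> y \<in> N \<and> {x, y} \<in> ET)\<^sup>*\<^sup>*"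

definition is_tree :: "'b set \<Rightarrow> 'b set set \<Rightarrow> bool" where
  "is_tree N ET \<longleftrightarrow> finite N \<and> N \<noteq> {} \<and> (\<forall>e\<in>ET. e \<subseteq> N \<and> card e = 2)
     \<and> (\<forall>a\<in>N. \<forall>b\<in>N. reach N ET a b) \<and> card ET = card N - 1"

definition tcd :: "'a set \<Rightarrow> 'a set set \<Rightarrow> 'b set \<Rightarrow> 'b set set \<Rightarrow> ('b \<Rightarrow> 'a set) \<Rightarrow> bool" where
  "tcd V E N ET X \<longleftrightarrow> is_tree N ET
     \<and> (\<forall>s\<in>N. \<forall>s'\<in>N. s \<noteq> s' \<longrightarrow> X s \<inter> X s' = {})
     \<and> \<Union> (X ` N) = V"

definition cross :: "'a set set \<Rightarrow> 'b set \<Rightarrow> 'b set set \<Rightarrow> ('b \<Rightarrow> 'a set) \<Rightarrow> 'b \<Rightarrow> nat" where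
  "cross E N ET X t = card {e \<in> E. \<exists>u v s s'. e = {u, v} \<and> s \<in> N - {t} \<and> s' \<in> N - {t}
       \<and> u \<in> X s \<and> v \<in> X s' \<and> \<not> reach (N - {t}) ET s s'}"

definition crossing_number :: "'a set set \<Rightarrow> 'b set \<Rightarrow> 'b set set \<Rightarrow> ('b \<Rightarrow> 'a set) \<Rightarrow> nat" where
  "crossing_number E N ET X = Max ((cross E N ET X) ` N)"

definition thickness :: "'b set \<Rightarrow> ('b \<Rightarrow> 'a set) \<Rightarrow> nat" where
  "thickness N X = Max ((\<lambda>t. card (X t)) ` N)"

text \<open>ecrw_alpha(G): minimum crossing number over tree-cut decompositions of thickness
  at most alpha (tree nodes labelled by naturals; G is finite so this is no restriction).\<close>
definition ecrw :: "nat \<Rightarrow> 'a set \<Rightarrow> 'a set set \<Rightarrow> nat" where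
  "ecrw \<alpha> V E = Inf {c. \<exists>(N :: nat set) ET X. tcd V E N ET X \<and> thickness N X \<le> \<alpha>
                        \<and> crossing_number E N ET X = c}"

definition gamma :: "'a set \<Rightarrow> 'a set set \<Rightarrow> 'a set \<Rightarrow> 'a \<Rightarrow> nat" where
  "gamma V E S v = card (delta E {v} (V - S))"

definition gamma_set :: "'a set \<Rightarrow> 'a set set \<Rightarrow> 'a set \<Rightarrow> 'a set \<Rightarrow> nat" where
  "gamma_set V E S Y = (\<Sum>v\<in>Y. gamma V E S v)"

definition is_star :: "'b set \<Rightarrow> 'b set set \<Rightarrow> 'b \<Rightarrow> 'b set \<Rightarrow> bool" where
  "is_star N ET tc L \<longleftrightarrow> L \<noteq> {} \<and> tc \<notin> L \<and> N = insert tc L \<and> ET = {{tc, l} | l. l \<in> L}"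

end

theory Submission
  imports Defs
begin

lemma reach_refl: "reach M F a a"
  unfolding reach_def by simp

lemma reach_step: "reach M F a b \<Longrightarrow> b \<in> M \<Longrightarrow> c \<in> M \<Longrightarrow> {b,c} \<in> F \<Longrightarrow> reach M F a c"
  unfolding reach_def by (simp add: rtranclp.rtrancl_into_rtrancl)

lemma reach_edge: assumes "b \<in> M" "c \<in> M" "{b,c} \<in> F" shows "reach M F b c"
  using reach_step[OF reach_refl assms] .

lemma reach_trans: assumes "reach M F a b" "reach M F b c" shows "reach M F a c"
  using assms unfolding reach_def by (rule rtranclp_trans)

lemma reach_sym: "reach M F a b \<Longrightarrow> reach M F b a"
  unfolding reach_def
proof (induction rule: rtranclp.induct)
  case (rtrancl_refl a) then show ?case by simp
next
  case (rtrancl_into_rtrancl a b c)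
  have bc: "b \<in> M" "c \<in> M" "{b,c} \<in> F" using rtrancl_into_rtrancl.hyps(2) by auto
  have "{c,b} = {b,c}" by blast
  with bc have cb: "{c,b} \<in> F" by simp
  show ?case
    by (rule converse_rtranclp_into_rtranclp[where b=b]) (use bc cb rtrancl_into_rtrancl.IH in simp_all)
qed

lemma reach_mono:
  assumes "\<And>x y. x \<in> A \<Longrightarrow> y \<in> A \<Longrightarrow> {x,y} \<in> F \<Longrightarrow> x \<in> B \<and> y \<in> B \<and> {x,y} \<in> G"
    and "reach A F a b"
  shows "reach B G a b"
proof -
  have le: "(\<lambda>x y. x \<in> A \<and> y \<in> A \<and> {x,y} \<in> F) \<le> (\<lambda>x y. x \<in> B \<and> y \<in> B \<and> {x,y} \<in> G)"
    by (rule predicate2I) (use assms(1) in blast)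
  show ?thesis unfolding reach_def
    by (rule predicate2D[OF rtranclp_mono[OF le] assms(2)[unfolded reach_def]])
qed

lemma reach_in: "reach M F a b \<Longrightarrow> b = a \<or> b \<in> M"
  unfolding reach_def
proof (induction rule: rtranclp_induct)
  case base then show ?case by simp
next
  case (step y z) then show ?case by simp
qed

lemma reach_in2: "reach M F a b \<Longrightarrow> a \<in> M \<Longrightarrow> b \<in> M"
proof -
  assume r: "reach M F a b" and a: "a \<in> M"
  from reach_in[OF r] show "b \<in> M"
  proof
    assume "b = a" with a show ?thesis by simp
  qed
qed

lemma reach_induct[consumes 1, case_names base step]:
  assumes "reach M F a b" "P a"
    "\<And>y z. reach M F a y \<Longrightarrow> y \<in> M \<Longrightarrow> z \<in> M \<Longrightarrow> {y,z} \<in> F \<Longrightarrow> P y \<Longrightarrow> P z"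
  shows "P b"
  using assms(1) unfolding reach_def
proof (induction rule: rtranclp_induct)
  case base then show ?case using assms(2) .
next
  case (step y z)
  then have "reach M F a y" unfolding reach_def by simp
  with step assms(3)[of y z] show ?case by simp
qed

lemma reach_exit:
  assumes "reach M F a b" "a \<in> M - D"
  shows "reach (M - D) F a b \<or> (\<exists>m d. reach (M - D) F a m \<and> m \<in> M - D \<and> d \<in> D \<and> d \<in> M \<and> {m,d} \<in> F)"
  using assms(1)
proof (induction rule: reach_induct)
  case base then show ?case by (simp add: reach_refl)
next
  case (step y z)
  show ?case
  proof (cases "reach (M - D) F a y")
    case True
    have yin: "y \<in> M - D" using reach_in[OF True] assms(2) by auto
    show ?thesis
    proof (cases "z \<in> D")
      case True
      have "\<exists>m d. reach (M - D) F a m \<and> m \<in> M - D \<and> d \<in> D \<and> d \<in> M \<and> {m,d} \<in> F"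
        apply (rule exI[of _ y], rule exI[of _ z])
        using yin \<open>reach (M - D) F a y\<close> step.hyps True by simp
      then show ?thesis by (rule disjI2)
    next
      case False
      have "reach (M - D) F a z"
        using reach_step[of "M - D" F a y z] \<open>reach (M - D) F a y\<close> yin step.hyps False by blast
      then show ?thesis ..
    qed
  next
    case False
    from step.IH show ?thesis
    proof
      assume "reach (M - D) F a y"
      with False show ?thesis by contradiction
    next
      assume "\<exists>m d. reach (M - D) F a m \<and> m \<in> M - D \<and> d \<in> D \<and> d \<in> M \<and> {m,d} \<in> F"
      then show ?thesis by (rule disjI2)
    qed
  qed
qed


lemma conn_card:
  assumes fin: "finite N" and r: "r \<in> N" and conn: "\<forall>s\<in>N. reach N F s r" and finF: "finite F"
  shows "card N \<le> card F + 1"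
proof -
  define P where "P = (\<lambda>x y. x \<in> N \<and> y \<in> N \<and> {x, y} \<in> F)"
  define d where "d = (\<lambda>s. LEAST m. (P ^^ m) s r)"
  have ex: "\<exists>p. P s p \<and> d p < d s" if s: "s \<in> N - {r}" for s
  proof -
    have "P\<^sup>*\<^sup>* s r" using conn s unfolding reach_def P_def by auto
    then obtain m where m: "(P ^^ m) s r" by (auto simp: rtranclp_power)
    then have dm: "(P ^^ d s) s r" unfolding d_def by (rule LeastI)
    have "d s \<noteq> 0"
    proof
      assume "d s = 0" with dm have "s = r" by simp
      with s show False by simp
    qed
    then obtain m' where m': "d s = Suc m'" by (cases "d s") auto
    then obtain p where p: "P s p" "(P ^^ m') p r" using dm relpowp_Suc_D2 by metis
    have "d p \<le> m'" unfolding d_def using p(2) by (rule Least_le)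
    then show ?thesis using p m' by auto
  qed
  define p where "p = (\<lambda>s. SOME p. P s p \<and> d p < d s)"
  have pp: "P s (p s) \<and> d (p s) < d s" if "s \<in> N - {r}" for s
    unfolding p_def using someI_ex[OF ex[OF that]] .
  define g where "g = (\<lambda>s. {s, p s})"
  have inj: "inj_on g (N - {r})"
  proof (rule inj_onI)
    fix s s' assume a: "s \<in> N - {r}" "s' \<in> N - {r}" "g s = g s'"
    show "s = s'"
    proof (rule ccontr)
      assume ne: "s \<noteq> s'"
      from a(3) have "(s = s' \<and> p s = p s') \<or> (s = p s' \<and> p s = s')"
        unfolding g_def doubleton_eq_iff .
      with ne have e1: "p s = s'" and e2: "s = p s'" by blast+
      have h1: "d s' < d s" using pp[OF a(1)] e1 by simp
      have "d (p s') < d s'" using pp[OF a(2)] by simp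
      then have "d s < d s'" using e2 by simp
      with h1 show False by simp
    qed
  qed
  have sub: "g ` (N - {r}) \<subseteq> F" using pp unfolding g_def P_def by auto
  have "card (N - {r}) \<le> card F"
    using card_inj_on_le[OF inj sub finF] .
  then show ?thesis using r fin by auto
qed

lemma tree_finE: "is_tree N ET \<Longrightarrow> finite ET"
  unfolding is_tree_def by (meson Pow_iff finite_Pow_iff rev_finite_subset subsetI)


lemma cyc:
  assumes tr: "is_tree N ET" and e: "{t,n} \<in> ET"
    and r1: "reach (N - {n}) ET t x" and r2: "reach (N - {t}) ET n x"
  shows False
proof -
  have tn: "t \<noteq> n" "t \<in> N" "n \<in> N" using tr e unfolding is_tree_def
    by (auto dest!: bspec[where x="{t,n}"] simp: card_2_iff)
  define F where "F = ET - {{t,n}}"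
  have m1: "reach N F t x"
    by (rule reach_mono[OF _ r1]) (auto simp: F_def doubleton_eq_iff)
  have m2: "reach N F n x"
    by (rule reach_mono[OF _ r2]) (auto simp: F_def doubleton_eq_iff)
  have tnF: "reach N F t n" using reach_trans[OF m1 reach_sym[OF m2]] .
  have ntF: "reach N F n t" using reach_sym[OF tnF] .
  have all: "reach N F a b" if "reach N ET a b" for a b
    using that unfolding reach_def
  proof (induction rule: rtranclp.induct)
    case (rtrancl_refl a) then show ?case by simp
  next
    case (rtrancl_into_rtrancl a b c)
    show ?case
    proof (cases "{b,c} = {t,n}")
      case True
      then have "(b = t \<and> c = n) \<or> (b = n \<and> c = t)" by (auto simp: doubleton_eq_iff)
      then show ?thesis using rtrancl_into_rtrancl.IH tnF ntF unfolding reach_def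
        by (auto intro: rtranclp_trans)
    next
      case False
      then show ?thesis using rtrancl_into_rtrancl
        by (simp add: F_def rtranclp.rtrancl_into_rtrancl)
    qed
  qed
  have finE: "finite ET" using tree_finE[OF tr] .
  have finN: "finite N" using tr unfolding is_tree_def by simp
  have conn: "\<forall>s\<in>N. reach N F s t"
  proof
    fix s assume "s \<in> N"
    then have "reach N ET s t" using tr tn unfolding is_tree_def by blast
    then show "reach N F s t" by (rule all)
  qed
  have finF: "finite F" using finE by (simp add: F_def)
  have "card N \<le> card F + 1" using conn_card[OF finN tn(2) conn finF] .
  moreover have "card F = card ET - 1" using finE e unfolding F_def by simp
  moreover have "card ET = card N - 1" using tr unfolding is_tree_def by simp
  moreover have "card N \<ge> 2"
  proof -
    have "card {t,n} \<le> card N" using tn tr unfolding is_tree_def by (intro card_mono) auto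
    then show ?thesis using tn by simp
  qed
  ultimately show False by linarith
qed


lemma star_tree:
  assumes "tc \<notin> L" "finite L" "L \<noteq> {}"
  shows "is_tree (insert tc L) {{tc, l} | l. l \<in> L}"
proof -
  have r: "reach (insert tc L) {{tc, l} | l. l \<in> L} a tc" if "a \<in> insert tc L" for a
  proof (cases "a = tc")
    case True then show ?thesis by (simp add: reach_refl)
  next
    case False then show ?thesis using that
      by (intro reach_edge) (auto simp: insert_commute)
  qed
  have eq: "{{tc, l} | l. l \<in> L} = (\<lambda>l. {tc,l}) ` L" by auto
  have inj: "inj_on (\<lambda>l. {tc,l}) L" using assms(1)
    by (auto simp: inj_on_def doubleton_eq_iff)
  have fin: "finite (insert tc L)" using assms by simp
  have ne: "insert tc L \<noteq> {}" by simp
  have e1: "\<forall>e\<in>{{tc, l} | l. l \<in> L}. e \<subseteq> insert tc L \<and> card e = 2"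
  proof
    fix e assume "e \<in> {{tc, l} | l. l \<in> L}"
    then obtain l where "e = {tc,l}" "l \<in> L" by blast
    moreover have "tc \<noteq> l" using assms(1) \<open>l \<in> L\<close> by blast
    ultimately show "e \<subseteq> insert tc L \<and> card e = 2" by auto
  qed
  have r2: "\<forall>a\<in>insert tc L. \<forall>b\<in>insert tc L. reach (insert tc L) {{tc, l} | l. l \<in> L} a b"
    using reach_trans[OF r reach_sym[OF r]] by blast
  have c: "card {{tc, l} | l. l \<in> L} = card (insert tc L) - 1"
    using assms by (simp add: eq card_image[OF inj])
  show ?thesis unfolding is_tree_def using fin ne e1 r2 c by blast
qed


lemma delta_card: "finite A \<Longrightarrow> finite B \<Longrightarrow> card (delta E A B) \<le> card A * card B"
proof -
  assume f: "finite A" "finite B"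
  have "delta E A B \<subseteq> (\<lambda>(u,v). {u,v}) ` (A \<times> B)" unfolding delta_def by auto
  then have "card (delta E A B) \<le> card ((\<lambda>(u,v). {u,v}) ` (A \<times> B))"
    using f by (intro card_mono) auto
  also have "\<dots> \<le> card (A \<times> B)" by (rule card_image_le) (use f in auto)
  finally show ?thesis by (simp add: card_cartesian_product)
qed

lemma gamma_total:
  assumes g: "graph V E" and S: "S \<subseteq> V"
  shows "gamma_set V E S S \<le> card (delta E S (V - S))"
proof -
  have finV: "finite V" using g unfolding graph_def by auto
  have finE: "finite E" using g unfolding graph_def
    by (meson Pow_iff finite_Pow_iff rev_finite_subset subsetI)
  have finS: "finite S" using finV S finite_subset by blast
  have "gamma_set V E S S = card (\<Union>v\<in>S. delta E {v} (V - S))"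
    unfolding gamma_set_def gamma_def
  proof (rule card_UN_disjoint[symmetric])
    show "finite S" by (rule finS)
    show "\<forall>i\<in>S. finite (delta E {i} (V - S))"
      by (intro ballI finite_subset[OF _ finE]) (auto simp: delta_def)
    show "\<forall>i\<in>S. \<forall>j\<in>S. i \<noteq> j \<longrightarrow> delta E {i} (V - S) \<inter> delta E {j} (V - S) = {}"
    proof (intro ballI impI)
      fix i j assume ij: "i \<in> S" "j \<in> S" "i \<noteq> j"
      show "delta E {i} (V - S) \<inter> delta E {j} (V - S) = {}"
      proof (rule ccontr)
        assume "delta E {i} (V - S) \<inter> delta E {j} (V - S) \<noteq> {}"
        then obtain x y where "{i,x} = {j,y}" "x \<notin> S" "y \<notin> S"
          unfolding delta_def by blast
        then show False using ij unfolding doubleton_eq_iff by blast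
      qed
    qed
  qed
  also have "\<dots> \<le> card (delta E S (V - S))"
  proof (rule card_mono)
    show "finite (delta E S (V - S))" by (rule finite_subset[OF _ finE]) (auto simp: delta_def)
    show "(\<Union>v\<in>S. delta E {v} (V - S)) \<subseteq> delta E S (V - S)" unfolding delta_def by blast
  qed
  finally show ?thesis .
qed




lemma neighbor:
  assumes tr: "is_tree N ET" and s: "s \<in> N - {t}" and t: "t \<in> N"
  shows "\<exists>n. reach (N - {t}) ET s n \<and> n \<in> N - {t} \<and> {n,t} \<in> ET"
proof -
  have "reach N ET s t" using tr s t unfolding is_tree_def by blast
  from reach_exit[OF this s] show ?thesis
  proof
    assume "reach (N - {t}) ET s t"
    from reach_in[OF this] s show ?thesis by auto
  next
    assume "\<exists>m d. reach (N - {t}) ET s m \<and> m \<in> N - {t} \<and> d \<in> {t} \<and> d \<in> N \<and> {m, d} \<in> ET"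
    then show ?thesis by blast
  qed
qed

lemma avoid:
  assumes tr: "is_tree N ET" and t: "t \<in> N" and n: "n \<in> N" and tn: "t \<noteq> n"
    and y: "y \<in> N - {n}" and nr: "\<not> reach (N - {n}) ET y t"
  shows "reach (N - {t}) ET y n"
proof -
  have yt: "y \<noteq> t" using nr reach_refl by metis
  have ryn: "reach N ET y n" using tr y n unfolding is_tree_def by blast
  have yin: "y \<in> N - {t, n}" using y yt by auto
  from reach_exit[OF ryn yin] show ?thesis
  proof (elim disjE)
    assume "reach (N - {t, n}) ET y n"
    from reach_in[OF this] y show ?thesis by auto
  next
    assume "\<exists>m d. reach (N - {t, n}) ET y m \<and> m \<in> N - {t, n} \<and> d \<in> {t, n} \<and> d \<in> N \<and> {m, d} \<in> ET"
    then obtain m d where md: "reach (N - {t, n}) ET y m" "m \<in> N - {t, n}" "d \<in> {t, n}" "{m, d} \<in> ET"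
      by blast
    show ?thesis
    proof (cases "d = t")
      case True
      have "reach (N - {n}) ET y m" by (rule reach_mono[OF _ md(1)]) auto
      then have "reach (N - {n}) ET y t" using reach_step[of "N - {n}" ET y m t] md t tn True by auto
      with nr show ?thesis by contradiction
    next
      case False
      then have dn: "d = n" using md(3) by auto
      have "reach (N - {t}) ET y m" by (rule reach_mono[OF _ md(1)]) auto
      then show ?thesis using reach_step[of "N - {t}" ET y m n] md n tn dn by auto
    qed
  qed
qed

lemma gamma_mono: "finite B \<Longrightarrow> A \<subseteq> B \<Longrightarrow> gamma_set V E S A \<le> gamma_set V E S B"
  unfolding gamma_set_def by (rule sum_mono2) auto

lemma gamma_disj:
  assumes g: "graph V E" and SV: "S \<subseteq> V" and A: "A \<subseteq> S" and B: "B \<subseteq> S" and AB: "A \<inter> B = {}"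
  shows "gamma_set V E S A + gamma_set V E S B \<le> card (delta E S (V - S))"
proof -
  have finS: "finite S" using g SV unfolding graph_def using finite_subset by blast
  have fA: "finite A" "finite B" using finS A B finite_subset by auto
  have "gamma_set V E S A + gamma_set V E S B = gamma_set V E S (A \<union> B)"
    unfolding gamma_set_def using fA AB by (simp add: sum.union_disjoint)
  also have "\<dots> \<le> gamma_set V E S S" using finS A B by (intro gamma_mono) auto
  also have "\<dots> \<le> card (delta E S (V - S))" by (rule gamma_total[OF g SV])
  finally show ?thesis .
qed



lemma ecrw_witness:
  assumes g: "graph V E" and c2: "card V \<ge> 2" and a: "\<alpha> > 0"
  shows "\<exists>(N :: nat set) ET X. tcd V E N ET X \<and> thickness N X \<le> \<alpha>"
proof -
  have finV: "finite V" using g unfolding graph_def by auto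
  define m where "m = card V"
  obtain f where f: "bij_betw f {0..<m} V" using ex_bij_betw_nat_finite[OF finV] unfolding m_def by blast
  define L where "L = {1..<m}"
  have N: "insert 0 L = {0..<m}" using c2 unfolding L_def m_def by auto
  have tr: "is_tree (insert 0 L) {{0, l} | l. l \<in> L}"
    by (rule star_tree) (use c2 in \<open>auto simp: L_def m_def\<close>)
  define X where "X = (\<lambda>i::nat. {f i})"
  have "tcd V E (insert 0 L) {{0, l} | l. l \<in> L} X"
    unfolding tcd_def
  proof (intro conjI tr ballI impI)
    fix s s' assume "s \<in> insert 0 L" "s' \<in> insert 0 L" "s \<noteq> s'"
    then show "X s \<inter> X s' = {}" using f unfolding N X_def bij_betw_def inj_on_def by auto
  next
    show "\<Union> (X ` insert 0 L) = V" using f unfolding N X_def bij_betw_def by auto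
  qed
  moreover have "thickness (insert 0 L) X \<le> \<alpha>"
  proof -
    have e: "(\<lambda>t. card (X t)) ` insert 0 L = {1}" unfolding X_def by auto
    show ?thesis unfolding thickness_def e using a by simp
  qed
  ultimately show ?thesis by blast
qed


lemma comp_eq:
  assumes "reach (N - {t}) ET s s2" "s \<in> N - {t}"
  shows "{s'. s' \<in> N - {t} \<and> reach (N - {t}) ET s s'} = {s'. s' \<in> N - {t} \<and> reach (N - {t}) ET s2 s'}"
  using assms reach_trans reach_sym by metis

lemma good_node:
  fixes X :: "'b \<Rightarrow> 'a set" and H :: "'a set \<Rightarrow> bool"
  assumes tr: "is_tree N ET" and disj: "\<forall>s\<in>N. \<forall>s'\<in>N. s \<noteq> s' \<longrightarrow> X s \<inter> X s' = {}"
    and HB: "\<And>A B. A \<inter> B = {} \<Longrightarrow> H A \<Longrightarrow> H B \<Longrightarrow> False"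
    and Hmono: "\<And>A B. A \<subseteq> B \<Longrightarrow> H A \<Longrightarrow> H B"
  shows "\<exists>t\<in>N. \<forall>s\<in>N - {t}. \<not> H (\<Union> (X ` {s'. s' \<in> N - {t} \<and> reach (N - {t}) ET s s'}))"
proof -
  define Z where "Z = (\<lambda>t s. \<Union> (X ` {s'. s' \<in> N - {t} \<and> reach (N - {t}) ET s s'}))"
  define f where "f = (\<lambda>t. card {s \<in> N - {t}. H (Z t s)})"
  have finN: "finite N" and Nne: "N \<noteq> {}" using tr unfolding is_tree_def by auto
  obtain t0 where "t0 \<in> N" using Nne by blast
  obtain t where t: "t \<in> N" and tmin: "\<And>y. y \<in> N \<Longrightarrow> f t \<le> f y"
    using ex_has_least_nat[of "\<lambda>t. t \<in> N" t0 f] \<open>t0 \<in> N\<close> by blast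
  have Zeq: "Z u s = Z u s2" if "reach (N - {u}) ET s s2" "s \<in> N - {u}" for u s s2
    unfolding Z_def using comp_eq[OF that] by simp
  have "\<forall>s\<in>N - {t}. \<not> H (Z t s)"
  proof (rule ccontr)
    assume "\<not> (\<forall>s\<in>N - {t}. \<not> H (Z t s))"
    then obtain s where s: "s \<in> N - {t}" "H (Z t s)" by blast
    obtain n where n: "reach (N - {t}) ET s n" "n \<in> N - {t}" "{n,t} \<in> ET"
      using neighbor[OF tr s(1) t] by blast
    have tn: "t \<noteq> n" "n \<in> N" using n by auto
    have Hn: "H (Z t n)" using s(2) Zeq[OF n(1) s(1)] by simp
    have edge: "{t,n} \<in> ET" using n(3) by (simp add: insert_commute)
    have dZ: "Z n t \<inter> Z t n = {}"
    proof (rule ccontr)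
      assume "Z n t \<inter> Z t n \<noteq> {}"
      then obtain x y1 y2 where y: "y1 \<in> N - {n}" "reach (N - {n}) ET t y1" "x \<in> X y1"
        "y2 \<in> N - {t}" "reach (N - {t}) ET n y2" "x \<in> X y2"
        unfolding Z_def by blast
      have "y1 = y2" using disj y by blast
      then show False using cyc[OF tr edge y(2)] y(5) by simp
    qed
    have sub: "{s' \<in> N - {n}. H (Z n s')} \<subseteq> {s' \<in> N - {t}. H (Z t s')} - {n}"
    proof
      fix s' assume s': "s' \<in> {s' \<in> N - {n}. H (Z n s')}"
      have nrt: "\<not> reach (N - {n}) ET s' t"
      proof
        assume r: "reach (N - {n}) ET s' t"
        have "Z n s' = Z n t" using Zeq[OF r] s' by simp
        then have "H (Z n t)" using s' by simp
        then show False using HB[OF dZ _ Hn] by simp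
      qed
      have rs'n: "reach (N - {t}) ET s' n" using avoid[OF tr t tn(2) tn(1) _ nrt] s' by simp
      have s't: "s' \<noteq> t" using nrt reach_refl by metis
      have s'N: "s' \<in> N - {t}" using s' s't by simp
      have "Z n s' \<subseteq> Z t s'"
      proof
        fix x assume "x \<in> Z n s'"
        then obtain y where y: "y \<in> N - {n}" "reach (N - {n}) ET s' y" "x \<in> X y"
          unfolding Z_def by blast
        have "\<not> reach (N - {n}) ET y t" using nrt reach_trans[OF y(2)] by blast
        then have "reach (N - {t}) ET y n" using avoid[OF tr t tn(2) tn(1) y(1)] by simp
        then have ry: "reach (N - {t}) ET s' y" using reach_trans[OF rs'n reach_sym] by blast
        have "y \<in> N - {t}" using reach_in2[OF ry s'N] .
        with ry show "x \<in> Z t s'" unfolding Z_def using y(3) by blast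
      qed
      then have "H (Z t s')" using Hmono s' by blast
      then show "s' \<in> {s' \<in> N - {t}. H (Z t s')} - {n}" using s'N s' by simp
    qed
    have fin2: "finite {s' \<in> N - {t}. H (Z t s')}" using finN by simp
    have nin: "n \<in> {s' \<in> N - {t}. H (Z t s')}" using n(2) Hn by simp
    have "f n \<le> card ({s' \<in> N - {t}. H (Z t s')} - {n})"
      unfolding f_def by (rule card_mono) (use fin2 sub in auto)
    also have "\<dots> < f t" unfolding f_def by (rule card_Diff1_less[OF fin2 nin])
    finally show False using tmin[OF tn(2)] by simp
  qed
  then show ?thesis using t unfolding Z_def by blast
qed



theorem lemma4p1:
  fixes V :: "'a set" and E :: "'a set set" and S :: "'a set" and \<alpha> k :: nat
  assumes "graph V E"
    and "\<alpha> > 0" and "k > 0"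
    and "S \<subseteq> V" and "card S \<ge> \<alpha> + 1"
    and "card (delta E S (V - S)) \<le> 2 * \<alpha>^2 + 4 * k"
    and "ecrw \<alpha> V E \<le> k"
  shows "\<exists>(N :: nat set) ET X tc L.
           tcd S (induced_edges E S) N ET X
         \<and> is_star N ET tc L
         \<and> card (X tc) \<le> \<alpha> \<and> cross (induced_edges E S) N ET X tc \<le> k
         \<and> (\<forall>t\<in>L. gamma_set V E S (X t) \<le> \<alpha>^2 + 2 * k
                 \<and> card (delta (induced_edges E S) (X t) (X tc)) \<le> \<alpha>^2 + k)
         \<and> (\<forall>q\<in>L. X q \<noteq> S)"
proof -
  note g = assms(1)
  have finV: "finite V" using g unfolding graph_def by auto
  have finE: "finite E" using g unfolding graph_def
    by (meson Pow_iff finite_Pow_iff rev_finite_subset subsetI)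
  have finS: "finite S" using finV assms(4) finite_subset by blast
  have Sne: "S \<noteq> {}" using assms(5) by auto
  have cardV: "card V \<ge> 2"
  proof -
    have "card S \<le> card V" using finV assms(4) by (rule card_mono)
    then show ?thesis using assms(2,5) by simp
  qed
  define C where "C = {c. \<exists>(N :: nat set) ET X. tcd V E N ET X \<and> thickness N X \<le> \<alpha>
                        \<and> crossing_number E N ET X = c}"
  have "C \<noteq> {}" using ecrw_witness[OF g cardV assms(2)] unfolding C_def by blast
  then have "Inf C \<in> C" by (rule Inf_nat_def1)
  then obtain N :: "nat set" and ET X where dec: "tcd V E N ET X" "thickness N X \<le> \<alpha>"
      "crossing_number E N ET X \<le> k"
    using assms(7) unfolding C_def ecrw_def by auto
  have tr: "is_tree N ET" and disj: "\<forall>s\<in>N. \<forall>s'\<in>N. s \<noteq> s' \<longrightarrow> X s \<inter> X s' = {}"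
    and unX: "\<Union> (X ` N) = V" using dec(1) unfolding tcd_def by auto
  have finN: "finite N" and Nne: "N \<noteq> {}" using tr unfolding is_tree_def by auto
  have crossk: "cross E N ET X t \<le> k" if "t \<in> N" for t
  proof -
    have "cross E N ET X t \<le> crossing_number E N ET X"
      unfolding crossing_number_def using finN that by (intro Max_ge) auto
    then show ?thesis using dec(3) by simp
  qed
  have thick: "card (X t) \<le> \<alpha>" if "t \<in> N" for t
  proof -
    have "card (X t) \<le> thickness N X"
      unfolding thickness_def using finN that by (intro Max_ge) auto
    then show ?thesis using dec(2) by simp
  qed
  have finX: "finite (X t)" if "t \<in> N" for t
  proof -
    have "X t \<subseteq> V" using unX that by blast
    then show ?thesis using finV by (rule finite_subset)
  qed
  define H where "H = (\<lambda>A. gamma_set V E S (A \<inter> S) > \<alpha>^2 + 2 * k \<or> S \<subseteq> A)"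
  have HB: "False" if "A \<inter> B = {}" "H A" "H B" for A B
  proof -
    have gd: "gamma_set V E S (A \<inter> S) + gamma_set V E S (B \<inter> S) \<le> 2 * \<alpha>^2 + 4 * k"
    proof -
      have "A \<inter> S \<inter> (B \<inter> S) = {}" using that(1) by blast
      then have "gamma_set V E S (A \<inter> S) + gamma_set V E S (B \<inter> S) \<le> card (delta E S (V - S))"
        by (intro gamma_disj[OF g assms(4)]) auto
      then show ?thesis using assms(6) by linarith
    qed
    show False
    proof (cases "S \<subseteq> A \<or> S \<subseteq> B")
      case True
      then have "A \<inter> S = {} \<or> B \<inter> S = {}" using that(1) by blast
      moreover have "\<not> S \<subseteq> A \<or> \<not> S \<subseteq> B" using that(1) Sne by blast
      ultimately show False using that(2,3) True unfolding H_def gamma_set_def by auto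
    next
      case False
      then show False using that(2,3) gd unfolding H_def by simp
    qed
  qed
  have Hmono: "H B" if "A \<subseteq> B" "H A" for A B
  proof -
    have "gamma_set V E S (A \<inter> S) \<le> gamma_set V E S (B \<inter> S)"
      using finS that(1) by (intro gamma_mono) auto
    then show ?thesis using that unfolding H_def by auto
  qed
  from good_node[OF tr disj HB Hmono] obtain tc where tc: "tc \<in> N"
    and light: "\<forall>s\<in>N - {tc}. \<not> H (\<Union> (X ` {s'. s' \<in> N - {tc} \<and> reach (N - {tc}) ET s s'}))"
    by (rule bexE)
  define R where "R = reach (N - {tc}) ET"
  define Z where "Z = (\<lambda>s. \<Union> (X ` {s'. s' \<in> N - {tc} \<and> R s s'}))"
  define L where "L = N - {tc}"
  define isrep where "isrep = (\<lambda>l. \<forall>s'. R l s' \<longrightarrow> l \<le> s')"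
  define X' where "X' = (\<lambda>l. if l = tc then X tc \<inter> S else if isrep l then Z l \<inter> S else {})"
  define ET' where "ET' = {{tc, l} | l. l \<in> L}"
  define ES where "ES = induced_edges E S"
  have NL: "N = insert tc L" and tcL: "tc \<notin> L" using tc unfolding L_def by auto
  have Lne: "L \<noteq> {}"
  proof
    assume "L = {}"
    then have "N = {tc}" using NL by simp
    then have "X tc = V" using unX by simp
    then have "card V \<le> \<alpha>" using thick[OF tc] by simp
    moreover have "card S \<le> card V" using finV assms(4) by (rule card_mono)
    ultimately show False using assms(5) by simp
  qed
  have finL: "finite L" using finN unfolding L_def by simp
  have lightZ: "\<not> H (Z l)" if "l \<in> L" for l
    using light that unfolding Z_def R_def L_def by blast
  have Rsym: "R a b \<Longrightarrow> R b a" for a b unfolding R_def by (rule reach_sym)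
  have Rtrans: "R a b \<Longrightarrow> R b c \<Longrightarrow> R a c" for a b c unfolding R_def by (rule reach_trans)
  have Rin: "R a b \<Longrightarrow> a \<in> L \<Longrightarrow> b \<in> L" for a b unfolding R_def L_def by (rule reach_in2)
  have Rrefl: "R a a" for a unfolding R_def by (rule reach_refl)
  have repeq: "l = l'" if "isrep l" "isrep l'" "R l l'" for l l'
    using that Rsym unfolding isrep_def by (meson antisym)
  have Zmem: "x \<in> Z l \<longleftrightarrow> (\<exists>y. y \<in> L \<and> R l y \<and> x \<in> X y)" for x l
    unfolding Z_def L_def by blast
  have X'sub: "X' l \<subseteq> S" for l unfolding X'_def by auto
  have tcd': "tcd S ES N ET' X'"
    unfolding tcd_def
  proof (intro conjI ballI impI)
    show "is_tree N ET'" unfolding NL ET'_def by (rule star_tree[OF tcL finL Lne])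
  next
    fix s s' assume ss: "s \<in> N" "s' \<in> N" "s \<noteq> s'"
    show "X' s \<inter> X' s' = {}"
    proof (rule ccontr)
      assume "X' s \<inter> X' s' \<noteq> {}"
      then obtain x where x: "x \<in> X' s" "x \<in> X' s'" by blast
      show False
      proof (cases "s = tc \<or> s' = tc")
        case True
        have cen: "X' tc \<inter> X' b = {}" if "b \<noteq> tc" for b
        proof (rule ccontr)
          assume "X' tc \<inter> X' b \<noteq> {}"
          then obtain z where z: "z \<in> X' tc" "z \<in> X' b" by blast
          then have "z \<in> Z b" "z \<in> X tc" using that unfolding X'_def by (auto split: if_splits)
          then obtain y where "y \<in> L" "z \<in> X y" using Zmem by blast
          then show False using disj tc \<open>z \<in> X tc\<close> unfolding L_def by blast
        qed
        show False
        proof (cases "s = tc")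
          case True
          then show False using cen[of s'] ss x by blast
        next
          case False
          then have "s' = tc" using \<open>s = tc \<or> s' = tc\<close> by simp
          then show False using cen[of s] ss x by blast
        qed
      next
        case False
        then have r: "isrep s" "isrep s'" "x \<in> Z s" "x \<in> Z s'" using x unfolding X'_def
          by (auto split: if_splits)
        then obtain y y' where y: "y \<in> L" "R s y" "x \<in> X y" "y' \<in> L" "R s' y'" "x \<in> X y'"
          using Zmem by metis
        have "y = y'" using disj y unfolding L_def by blast
        then have "R s s'" using y Rtrans Rsym by metis
        then show False using repeq r ss(3) by blast
      qed
    qed
  next
    show "\<Union> (X' ` N) = S"
    proof
      show "\<Union> (X' ` N) \<subseteq> S" using X'sub by blast
    next
      show "S \<subseteq> \<Union> (X' ` N)"
      proof
        fix v assume v: "v \<in> S"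
        then obtain y where y: "y \<in> N" "v \<in> X y" using unX assms(4) by blast
        show "v \<in> \<Union> (X' ` N)"
        proof (cases "y = tc")
          case True
          then show ?thesis using y v tc unfolding X'_def by auto
        next
          case False
          define r where "r = (LEAST r. R y r)"
          have yr: "R y r" unfolding r_def by (rule LeastI[of "R y" y]) (rule Rrefl)
          have yL: "y \<in> L" using False y unfolding L_def by simp
          have rL: "r \<in> L" using Rin[OF yr yL] .
          have rep: "isrep r" unfolding isrep_def
          proof (intro allI impI)
            fix s' assume "R r s'"
            then have "R y s'" using Rtrans yr by blast
            then show "r \<le> s'" unfolding r_def by (rule Least_le)
          qed
          have "v \<in> Z r" using Zmem yL Rsym[OF yr] y by blast
          then have "v \<in> X' r" using rep rL tcL v unfolding X'_def by auto
          then show ?thesis using rL NL by blast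
        qed
      qed
    qed
  qed
  have star: "is_star N ET' tc L" unfolding is_star_def ET'_def using Lne tcL NL by simp
  have c1: "card (X' tc) \<le> \<alpha>"
  proof -
    have "card (X' tc) \<le> card (X tc)" unfolding X'_def using finX[OF tc] by (simp add: card_mono)
    then show ?thesis using thick[OF tc] by simp
  qed
  have ESE: "ES \<subseteq> E" unfolding ES_def induced_edges_def by auto
  have c2: "cross ES N ET' X' tc \<le> k"
  proof -
    let ?A = "{e \<in> ES. \<exists>u v s s'. e = {u, v} \<and> s \<in> N - {tc} \<and> s' \<in> N - {tc}
       \<and> u \<in> X' s \<and> v \<in> X' s' \<and> \<not> reach (N - {tc}) ET' s s'}"
    let ?B = "{e \<in> E. \<exists>u v s s'. e = {u, v} \<and> s \<in> N - {tc} \<and> s' \<in> N - {tc}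
       \<and> u \<in> X s \<and> v \<in> X s' \<and> \<not> reach (N - {tc}) ET s s'}"
    have sub: "?A \<subseteq> ?B"
    proof
      fix e assume "e \<in> ?A"
      then obtain u v s s' where e: "e \<in> ES" "e = {u, v}" "s \<in> N - {tc}" "s' \<in> N - {tc}"
        "u \<in> X' s" "v \<in> X' s'" "\<not> reach (N - {tc}) ET' s s'" by blast
      have ne: "s \<noteq> s'" using e(7) reach_refl by metis
      have "isrep s" "u \<in> Z s" using e(3,5) unfolding X'_def by (auto split: if_splits)
      have "isrep s'" "v \<in> Z s'" using e(4,6) unfolding X'_def by (auto split: if_splits)
      obtain y1 where y1: "y1 \<in> L" "R s y1" "u \<in> X y1" using Zmem \<open>u \<in> Z s\<close> by blast
      obtain y2 where y2: "y2 \<in> L" "R s' y2" "v \<in> X y2" using Zmem \<open>v \<in> Z s'\<close> by blast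
      have "\<not> R y1 y2"
      proof
        assume "R y1 y2"
        then have "R s s'" using Rtrans[OF y1(2)] Rtrans Rsym[OF y2(2)] by blast
        then show False using repeq \<open>isrep s\<close> \<open>isrep s'\<close> ne by blast
      qed
      then show "e \<in> ?B" using e(1,2) ESE y1 y2 unfolding R_def L_def by blast
    qed
    have finB: "finite ?B" using finE by simp
    have "card ?A \<le> card ?B" by (rule card_mono[OF finB sub])
    also have "\<dots> = cross E N ET X tc" unfolding cross_def by simp
    also have "\<dots> \<le> k" by (rule crossk[OF tc])
    finally show ?thesis unfolding cross_def .
  qed
  have c3: "\<forall>t\<in>L. gamma_set V E S (X' t) \<le> \<alpha>^2 + 2 * k
                 \<and> card (delta ES (X' t) (X' tc)) \<le> \<alpha>^2 + k"
  proof
    fix t assume t: "t \<in> L"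
    then have ttc: "t \<noteq> tc" using tcL by blast
    show "gamma_set V E S (X' t) \<le> \<alpha>^2 + 2 * k \<and> card (delta ES (X' t) (X' tc)) \<le> \<alpha>^2 + k"
    proof (cases "isrep t")
      case False
      then have "X' t = {}" using ttc unfolding X'_def by simp
      moreover have "delta ES {} (X' tc) = {}" unfolding delta_def by simp
      ultimately show ?thesis unfolding gamma_set_def by simp
    next
      case True
      then have Xt: "X' t = Z t \<inter> S" using ttc unfolding X'_def by simp
      have Xtc: "X' tc = X tc \<inter> S" unfolding X'_def by simp
      have gam: "gamma_set V E S (X' t) \<le> \<alpha>^2 + 2 * k"
        using lightZ[OF t] Xt unfolding H_def by simp
      have tN: "t \<in> N - {tc}" using t unfolding L_def .
      obtain n where n: "reach (N - {tc}) ET t n" "n \<in> N - {tc}" "{n,tc} \<in> ET"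
        using neighbor[OF tr tN tc] by blast
      have edge: "{tc,n} \<in> ET" using n(3) by (simp add: insert_commute)
      have nN: "n \<in> N" "n \<noteq> tc" using n(2) by auto
      let ?D = "delta E (X n) (X tc)"
      let ?C = "{e \<in> E. \<exists>u v s s'. e = {u, v} \<and> s \<in> N - {n} \<and> s' \<in> N - {n}
         \<and> u \<in> X s \<and> v \<in> X s' \<and> \<not> reach (N - {n}) ET s s'}"
      have sub: "delta ES (X' t) (X' tc) \<subseteq> ?D \<union> ?C"
      proof
        fix e assume "e \<in> delta ES (X' t) (X' tc)"
        then obtain u v where e: "e \<in> ES" "e = {u,v}" "u \<in> Z t" "v \<in> X tc"
          unfolding delta_def Xt Xtc by blast
        obtain y where y: "y \<in> L" "R t y" "u \<in> X y" using Zmem e(3) by blast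
        show "e \<in> ?D \<union> ?C"
        proof (cases "y = n")
          case True
          then have "e \<in> ?D" using e y ESE unfolding delta_def by blast
          then show ?thesis by blast
        next
          case False
          have nr: "\<not> reach (N - {n}) ET y tc"
          proof
            assume r: "reach (N - {n}) ET y tc"
            have r1: "reach (N - {n}) ET tc y" using reach_sym[OF r] .
            have "R n y" using Rtrans[OF Rsym[of t n] y(2)] n(1) unfolding R_def by blast
            then have r2: "reach (N - {tc}) ET n y" unfolding R_def .
            show False using cyc[OF tr edge r1 r2] .
          qed
          have "y \<in> N - {n}" "tc \<in> N - {n}" using y(1) False tc nN unfolding L_def by auto
          then have "e \<in> ?C" using e ESE y(3) nr by blast
          then show ?thesis by blast
        qed
      qed
      have finC: "finite (?D \<union> ?C)" using finE unfolding delta_def by simp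
      have "card (delta ES (X' t) (X' tc)) \<le> card (?D \<union> ?C)" by (rule card_mono[OF finC sub])
      also have "\<dots> \<le> card ?D + card ?C" by (rule card_Un_le)
      also have "card ?D \<le> \<alpha> * \<alpha>"
      proof -
        have "card ?D \<le> card (X n) * card (X tc)" by (rule delta_card[OF finX[OF nN(1)] finX[OF tc]])
        also have "\<dots> \<le> \<alpha> * \<alpha>" by (rule mult_le_mono[OF thick[OF nN(1)] thick[OF tc]])
        finally show ?thesis .
      qed
      moreover have "card ?C \<le> k" using crossk[OF nN(1)] unfolding cross_def .
      ultimately have "card (delta ES (X' t) (X' tc)) \<le> \<alpha> * \<alpha> + k" by linarith
      then show ?thesis using gam by (simp add: power2_eq_square)
    qed
  qed
  have c4: "\<forall>q\<in>L. X' q \<noteq> S"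
  proof
    fix q assume q: "q \<in> L"
    then have qtc: "q \<noteq> tc" using tcL by blast
    show "X' q \<noteq> S"
    proof (cases "isrep q")
      case True
      then have "X' q = Z q \<inter> S" using qtc unfolding X'_def by simp
      moreover have "\<not> S \<subseteq> Z q" using lightZ[OF q] unfolding H_def by simp
      ultimately show ?thesis by blast
    next
      case False
      then show ?thesis using qtc Sne unfolding X'_def by simp
    qed
  qed
  show ?thesis using tcd' star c1 c2 c3 c4 unfolding ES_def by blast
qed


end
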